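(* Let $n,k\geq 1$ be integers with $n+k$ odd and let $A_1,\dots,A_k,B_1,\dots,B_k\in\mathbb{R}$. For $\alpha\in\mathbb{C}$ put $a_i=A_i+B_i\alpha$ ($i=1,\dots,k$) and $$O_\alpha(z)=z^n\,\frac{a_k+a_{k-1}z+\dots+a_1 z^{k-1}+z^k}{1+a_1 z+\dots+a_{k-1}z^{k-1}+a_k z^k},$$ considered for those $\alpha$ with $a_k\neq0$, $1+a_1+\dots+a_k\neq0$ and $1+\sum_{j=1}^k(-1)^ja_j\neq 0$; for such $\alpha$, $z=-1$ is a fixed point of $O_\alpha$. Define $$C=n+k+\sum_{j=1}^k(-1)^j(n+k-2j)A_j,\quad D=\sum_{j=1}^k(-1)^j(n+k-2j)B_j,\quad C'=1+\sum_{j=1}^k(-1)^jA_j,\quad D'=\sum_{j=1}^k(-1)^jB_j,$$ and, when $D^2-D'^2\neq0$, $c=(CD-C'D')/(D^2-D'^2)$ and $r=(C'D-CD')/(D^2-D'^2)$. Then: \begin{enumerate} \item If $D^2-D'^2\neq0$: (i) $z=-1$ is indifferent on the circle $S:\ |\alpha+c|=|r|$; (ii) $z=-1$ is attracting inside $S$ if $D^2-D'^2>0$ and outside $S$ if $D^2-D'^2<0$; (iii) $z=-1$ is repelling outside $S$ if $D^2-D'^2>0$ and inside $S$ if $D^2-D'^2<0$. \item If $D^2-D'^2=0$: (a) if $D=D'\neq0$: $z=-1$ is indifferent if $C=C'$; $z=-1$ is attracting if either $\mathrm{Re}(\alpha)<-\frac{C+C'}{2D}$ and $D(C-C')>0$,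 or $\mathrm{Re}(\alpha)>-\frac{C+C'}{2D}$ and $D(C-C')<0$; $z=-1$ is repelling otherwise. (b) if $D=-D'\neq0$: $z=-1$ is indifferent if $C=-C'$; $z=-1$ is attracting if either $\mathrm{Re}(\alpha)<\frac{C'-C}{2D}$ and $D(C+C')>0$, or $\mathrm{Re}(\alpha)>\frac{C'-C}{2D}$ and $D(C+C')<0$; $z=-1$ is repelling otherwise. (c) if $D=D'=0$: $z=-1$ is indifferent if $|C|=|C'|$, attracting if $|C|<|C'|$, and repelling if $|C|>|C'|$. \end{enumerate} Moreover, if $\alpha=-C/D$, the fixed point $z=-1$ is superattracting.
   Context: For a fixed point $z_0$ of a rational map $R$ with multiplier $\lambda=R'(z_0)$, $z_0$ is attracting if $|\lambda|<1$, superattracting if $\lambda=0$, repelling if $|\lambda|>1$, and indifferent if $|\lambda|=1$. *)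

theory Defs
  imports "HOL-Analysis.Analysis"
begin

definition attracting_fp :: "(complex \<Rightarrow> complex) \<Rightarrow> complex \<Rightarrow> bool" where
  "attracting_fp R z0 \<longleftrightarrow> R z0 = z0 \<and> cmod (deriv R z0) < 1"

definition superattracting_fp :: "(complex \<Rightarrow> complex) \<Rightarrow> complex \<Rightarrow> bool" where
  "superattracting_fp R z0 \<longleftrightarrow> R z0 = z0 \<and> deriv R z0 = 0"

definition repelling_fp :: "(complex \<Rightarrow> complex) \<Rightarrow> complex \<Rightarrow> bool" where
  "repelling_fp R z0 \<longleftrightarrow> R z0 = z0 \<and> cmod (deriv R z0) > 1"

definition indifferent_fp :: "(complex \<Rightarrow> complex) \<Rightarrow> complex \<Rightarrow> bool" where
  "indifferent_fp R z0 \<longleftrightarrow> R z0 = z0 \<and> cmod (deriv R z0) = 1"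

definition coef :: "(nat \<Rightarrow> real) \<Rightarrow> (nat \<Rightarrow> real) \<Rightarrow> complex \<Rightarrow> nat \<Rightarrow> complex" where
  "coef A B \<alpha> i = complex_of_real (A i) + complex_of_real (B i) * \<alpha>"

definition Omap :: "nat \<Rightarrow> nat \<Rightarrow> (nat \<Rightarrow> real) \<Rightarrow> (nat \<Rightarrow> real) \<Rightarrow> complex \<Rightarrow> complex \<Rightarrow> complex" where
  "Omap n k A B \<alpha> z =
     z ^ n * (((\<Sum>j=1..k. coef A B \<alpha> j * z ^ (k - j)) + z ^ k)
              / (1 + (\<Sum>j=1..k. coef A B \<alpha> j * z ^ j)))"

definition admissible :: "nat \<Rightarrow> (nat \<Rightarrow> real) \<Rightarrow> (nat \<Rightarrow> real) \<Rightarrow> complex \<Rightarrow> bool" where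
  "admissible k A B \<alpha> \<longleftrightarrow>
     coef A B \<alpha> k \<noteq> 0 \<and>
     1 + (\<Sum>j=1..k. coef A B \<alpha> j) \<noteq> 0 \<and>
     1 + (\<Sum>j=1..k. (-1) ^ j * coef A B \<alpha> j) \<noteq> 0"

end

theory Submission
  imports Defs
begin

lemma dP: "((\<lambda>z. (\<Sum>j=1..k. a j * z^(k-j)) + z^k) has_field_derivative
   ((\<Sum>j=1..k. a j * (of_nat (k-j) * z^(k-j-1))) + of_nat k * z^(k-1))) (at (z::complex))"
  by (auto intro!: derivative_eq_intros sum.cong)

lemma dQ: "((\<lambda>z. 1 + (\<Sum>j=1..k. a j * z^j)) has_field_derivative
   ((\<Sum>j=1..k. a j * (of_nat j * z^(j-1))))) (at (z::complex))"
  by (auto intro!: derivative_eq_intros sum.cong)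

lemma sq1: "(-1::complex)^j * (-1)^j = 1"
  by (simp flip: power_mult_distrib)

lemma neg1pow: "j \<le> k \<Longrightarrow> (-1::complex)^(k-j) = (-1)^k * (-1)^j"
proof -
  assume "j \<le> k"
  then have "(-1::complex)^k = (-1)^(k-j) * (-1)^j" by (metis le_add_diff_inverse2 power_add)
  then have "(-1::complex)^k * (-1)^j = (-1)^(k-j) * ((-1)^j * (-1)^j)" by simp
  then show ?thesis by (simp add: sq1)
qed

lemma neg1pred: "1 \<le> j \<Longrightarrow> (-1::complex)^(j-1) = - ((-1)^j)"
  by (cases j) auto

lemma alg_aux:
  fixes q e s1 :: complex
  assumes "q \<noteq> 0" "e * e = 1"
  shows "of_nat n * (- e) * (- e * q / q) + ((- (- e) * (of_nat k * q - s1)) * q - (- e * q) * (- s1)) / (q * q) * e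
     = (of_nat (n + k) * q - 2 * s1) / q"
proof -
  have "- e * q / q = - e" using assms by simp
  moreover have "((- (- e) * (of_nat k * q - s1)) * q - (- e * q) * (- s1)) / (q * q) = e * (of_nat k * q - 2 * s1) / q"
    using assms by (simp add: field_simps)
  ultimately have "of_nat n * (- e) * (- e * q / q) + ((- (- e) * (of_nat k * q - s1)) * q - (- e * q) * (- s1)) / (q * q) * e
     = of_nat n * (e * e) + (e * e) * (of_nat k * q - 2 * s1) / q" by (simp add: algebra_simps)
  also have "\<dots> = (of_nat (n + k) * q - 2 * s1) / q" using assms by (simp add: field_simps)
  finally show ?thesis .
qed

lemma mult_at_m1:
  fixes a :: "nat \<Rightarrow> complex"
  assumes n1: "n \<ge> 1" and odd: "odd (n+k)" and q0: "1 + (\<Sum>j=1..k. (-1)^j * a j) \<noteq> 0"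
  shows "((\<lambda>z. z^n * (((\<Sum>j=1..k. a j * z^(k-j)) + z^k) / (1 + (\<Sum>j=1..k. a j * z^j))))
     has_field_derivative
   (of_nat (n+k) * (1 + (\<Sum>j=1..k. (-1)^j * a j)) - 2 * (\<Sum>j=1..k. of_nat j * (-1)^j * a j))
     / (1 + (\<Sum>j=1..k. (-1)^j * a j))) (at (-1))"
    and "(-1::complex)^n * (((\<Sum>j=1..k. a j * (-1)^(k-j)) + (-1)^k) / (1 + (\<Sum>j=1..k. a j * (-1)^j))) = -1"
proof -
  define s0 where "s0 = (\<Sum>j=1..k. (-1)^j * a j)"
  define s1 where "s1 = (\<Sum>j=1..k. of_nat j * (-1)^j * a j)"
  define e where "e = (-1::complex)^n"
  define f where "f = (-1::complex)^k"
  have ef: "e * f = -1" unfolding e_def f_def using odd by (simp flip: power_add)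
  have q: "1 + s0 \<noteq> 0" using q0 s0_def by simp
  have Qv: "1 + (\<Sum>j=1..k. a j * (-1::complex)^j) = 1 + s0"
    unfolding s0_def by (simp add: mult.commute)
  have Pv: "(\<Sum>j=1..k. a j * (-1::complex)^(k-j)) + (-1)^k = f * (1 + s0)"
  proof -
    have "(\<Sum>j=1..k. a j * (-1::complex)^(k-j)) = (\<Sum>j=1..k. f * ((-1)^j * a j))"
      by (rule sum.cong) (auto simp: neg1pow f_def)
    also have "\<dots> = f * s0" by (simp add: s0_def sum_distrib_left)
    finally show ?thesis by (simp add: f_def algebra_simps)
  qed
  have Q'v: "(\<Sum>j=1..k. a j * (of_nat j * (-1::complex)^(j-1))) = - s1"
  proof -
    have "(\<Sum>j=1..k. a j * (of_nat j * (-1::complex)^(j-1))) = (\<Sum>j=1..k. - (of_nat j * (-1)^j * a j))"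
    proof (rule sum.cong)
      fix j assume "j \<in> {1..k}"
      then have "(-1::complex)^(j-1) = - ((-1)^j)" by (intro neg1pred) auto
      then show "a j * (of_nat j * (-1::complex)^(j-1)) = - (of_nat j * (-1)^j * a j)" by simp
    qed simp
    then show ?thesis by (simp add: s1_def sum_negf)
  qed
  have P'v: "(\<Sum>j=1..k. a j * (of_nat (k-j) * (-1::complex)^(k-j-1))) + of_nat k * (-1)^(k-1)
     = - f * (of_nat k * (1 + s0) - s1)"
  proof -
    have K: "of_nat k * (-1::complex)^(k-1) = - f * of_nat k" by (cases k) (auto simp: f_def)
    have "(\<Sum>j=1..k. a j * (of_nat (k-j) * (-1::complex)^(k-j-1)))
       = (\<Sum>j=1..k. - f * (of_nat k * ((-1)^j * a j) - of_nat j * (-1)^j * a j))"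
    proof (rule sum.cong)
      fix j assume j: "j \<in> {1..k}"
      show "a j * (of_nat (k-j) * (-1::complex)^(k-j-1)) = - f * (of_nat k * ((-1)^j * a j) - of_nat j * (-1)^j * a j)"
      proof (cases "j = k")
        case True then show ?thesis by simp
      next
        case False
        then have "1 \<le> k - j" using j by auto
        then have X: "(-1::complex)^(k-j-1) = - ((-1)^k * (-1)^j)" using neg1pred[of "k-j"] neg1pow[of j k] j by simp
        have Y: "(of_nat (k-j)::complex) = of_nat k - of_nat j" using j by (simp add: of_nat_diff)
        show ?thesis unfolding X Y f_def by (simp add: algebra_simps)
      qed
    qed simp
    also have "\<dots> = - f * (of_nat k * s0 - s1)"
      unfolding s0_def s1_def by (simp add: sum_negf sum_subtractf flip: sum_distrib_left)
    finally show ?thesis using K by (simp add: algebra_simps)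
  qed
  have ee: "e * e = 1" unfolding e_def by (rule sq1)
  have qsq: "1 + (s0 * s0 + s0 * 2) \<noteq> 0"
  proof -
    have "1 + (s0 * s0 + s0 * 2) = (1+s0)*(1+s0)" by (simp add: algebra_simps)
    then show ?thesis using q by simp
  qed
  have ee2: "\<And>x. e * (e * x) = x" using ee by (simp add: mult.assoc[symmetric])
  have fe: "f = - e"
  proof -
    have "e * e * f = - e" using ef by (simp add: mult.assoc)
    then show ?thesis using ee by simp
  qed
  have en: "(-1::complex)^(n-1) = - e" unfolding e_def using n1 by (rule neg1pred)
  have Dn: "((\<lambda>z. z^n) has_field_derivative of_nat n * (-1)^(n-1)) (at (-1::complex))"
    by (auto intro!: derivative_eq_intros)
  have qq: "1 + (\<Sum>j=1..k. a j * (-1::complex)^j) \<noteq> 0" using Qv q by simp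
  note D = DERIV_mult[OF Dn DERIV_divide[OF dP dQ qq]]
  show "((\<lambda>z. z^n * (((\<Sum>j=1..k. a j * z^(k-j)) + z^k) / (1 + (\<Sum>j=1..k. a j * z^j))))
     has_field_derivative
   (of_nat (n+k) * (1 + (\<Sum>j=1..k. (-1)^j * a j)) - 2 * (\<Sum>j=1..k. of_nat j * (-1)^j * a j))
     / (1 + (\<Sum>j=1..k. (-1)^j * a j))) (at (-1))"
    unfolding s0_def[symmetric] s1_def[symmetric]
  proof (rule DERIV_cong[OF D])
    show "of_nat n * (-1) ^ (n - 1) * (((\<Sum>j=1..k. a j * (-1) ^ (k - j)) + (-1) ^ k) / (1 + (\<Sum>j=1..k. a j * (-1) ^ j))) +
    (((\<Sum>j=1..k. a j * (of_nat (k - j) * (-1) ^ (k - j - 1))) + of_nat k * (-1) ^ (k - 1)) * (1 + (\<Sum>j=1..k. a j * (-1) ^ j)) -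
     ((\<Sum>j=1..k. a j * (-1) ^ (k - j)) + (-1) ^ k) * (\<Sum>j=1..k. a j * (of_nat j * (-1) ^ (j - 1)))) /
    ((1 + (\<Sum>j=1..k. a j * (-1) ^ j)) * (1 + (\<Sum>j=1..k. a j * (-1) ^ j))) * (-1) ^ n =
    (of_nat (n + k) * (1 + s0) - 2 * s1) / (1 + s0)"
      unfolding Pv Qv P'v Q'v en e_def[symmetric] fe using q ee
      by (rule alg_aux)
  qed
  show "(-1::complex)^n * (((\<Sum>j=1..k. a j * (-1)^(k-j)) + (-1)^k) / (1 + (\<Sum>j=1..k. a j * (-1)^j))) = -1"
    using q unfolding Pv Qv e_def[symmetric] fe by (simp add: ee)
qed

lemma lam:
  fixes n k :: nat and A B :: "nat \<Rightarrow> real" and C D C' D' :: real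
  assumes n1: "n \<ge> 1" and odd: "odd (n + k)"
    and C_def: "C = real n + real k + (\<Sum>j=1..k. (-1) ^ j * (real n + real k - 2 * real j) * A j)"
    and D_def: "D = (\<Sum>j=1..k. (-1) ^ j * (real n + real k - 2 * real j) * B j)"
    and C'_def: "C' = 1 + (\<Sum>j=1..k. (-1) ^ j * A j)"
    and D'_def: "D' = (\<Sum>j=1..k. (-1) ^ j * B j)"
    and adm: "admissible k A B \<alpha>"
  shows "Omap n k A B \<alpha> (-1) = -1"
    and "of_real C' + of_real D' * \<alpha> \<noteq> 0"
    and "deriv (Omap n k A B \<alpha>) (-1) = (of_real C + of_real D * \<alpha>) / (of_real C' + of_real D' * \<alpha>)"
proof -
  define a where "a = coef A B \<alpha>"
  define s0 where "s0 = (\<Sum>j=1..k. (-1)^j * a j)"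
  define s1 where "s1 = (\<Sum>j=1..k. of_nat j * (-1)^j * a j)"
  have q0: "1 + s0 \<noteq> 0" using adm unfolding admissible_def s0_def a_def by simp
  have Om: "Omap n k A B \<alpha> = (\<lambda>z. z^n * (((\<Sum>j=1..k. a j * z^(k-j)) + z^k) / (1 + (\<Sum>j=1..k. a j * z^j))))"
    unfolding Omap_def a_def by (rule ext) simp
  show "Omap n k A B \<alpha> (-1) = -1" unfolding Om using mult_at_m1(2)[OF n1 odd q0[unfolded s0_def]] by simp
  have eC': "complex_of_real C' + complex_of_real D' * \<alpha> = 1 + s0"
  proof -
    have "complex_of_real C' + complex_of_real D' * \<alpha> = 1 + (\<Sum>j=1..k. of_real ((-1) ^ j * A j) + of_real ((-1) ^ j * B j) * \<alpha>)"
      by (simp add: C'_def D'_def of_real_sum sum_distrib_right sum.distrib)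
    also have "\<dots> = 1 + s0" unfolding s0_def a_def coef_def
      by (intro arg_cong[where f="\<lambda>x. 1 + x"] sum.cong) (simp_all add: algebra_simps)
    finally show ?thesis .
  qed
  have eC: "complex_of_real C + complex_of_real D * \<alpha> = of_nat (n + k) * (1 + s0) - 2 * s1"
  proof -
    have "complex_of_real C + complex_of_real D * \<alpha> = of_nat (n + k) + (\<Sum>j=1..k. of_real ((-1) ^ j * (real n + real k - 2 * real j) * A j)
        + of_real ((-1) ^ j * (real n + real k - 2 * real j) * B j) * \<alpha>)"
      by (simp add: C_def D_def of_real_sum sum_distrib_right sum.distrib)
    also have "\<dots> = of_nat (n + k) + (\<Sum>j=1..k. of_nat (n + k) * ((-1)^j * a j) - 2 * (of_nat j * (-1)^j * a j))"
      unfolding a_def coef_def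
      by (intro arg_cong[where f="\<lambda>x. of_nat (n + k) + x"] sum.cong) (simp_all add: algebra_simps)
    also have "\<dots> = of_nat (n + k) * (1 + s0) - 2 * s1"
      unfolding s0_def s1_def by (simp add: sum_subtractf sum_distrib_left algebra_simps)
    finally show ?thesis .
  qed
  show "of_real C' + of_real D' * \<alpha> \<noteq> 0" using eC' q0 by simp
  have "(Omap n k A B \<alpha> has_field_derivative (of_nat (n + k) * (1 + s0) - 2 * s1) / (1 + s0)) (at (-1))"
    unfolding Om s0_def s1_def using mult_at_m1(1)[OF n1 odd q0[unfolded s0_def]] by simp
  then have "deriv (Omap n k A B \<alpha>) (-1) = (of_nat (n + k) * (1 + s0) - 2 * s1) / (1 + s0)"
    by (rule DERIV_imp_deriv)
  then show "deriv (Omap n k A B \<alpha>) (-1) = (of_real C + of_real D * \<alpha>) / (of_real C' + of_real D' * \<alpha>)"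
    using eC eC' by simp
qed


lemma Gform:
  fixes \<alpha> :: complex and C D C' D' :: real
  shows "(cmod (of_real C + of_real D * \<alpha>))^2 - (cmod (of_real C' + of_real D' * \<alpha>))^2
    = (D^2 - D'^2) * ((Re \<alpha>)^2 + (Im \<alpha>)^2) + 2 * (C * D - C' * D') * Re \<alpha> + C^2 - C'^2"
  unfolding cmod_power2 by (simp add: power2_eq_square algebra_simps)

lemma cls:
  fixes X Y :: complex
  assumes "Y \<noteq> 0"
  shows "(cmod X)^2 - (cmod Y)^2 = 0 \<Longrightarrow> cmod (X / Y) = 1"
    and "(cmod X)^2 - (cmod Y)^2 < 0 \<Longrightarrow> cmod (X / Y) < 1"
    and "(cmod X)^2 - (cmod Y)^2 > 0 \<Longrightarrow> cmod (X / Y) > 1"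
proof -
  have Y: "cmod Y > 0" using assms by simp
  show "(cmod X)^2 - (cmod Y)^2 = 0 \<Longrightarrow> cmod (X / Y) = 1"
  proof -
    assume "(cmod X)^2 - (cmod Y)^2 = 0"
    then have "cmod X = cmod Y" using Y by (simp add: power2_eq_iff_nonneg)
    then show ?thesis using Y by (simp add: norm_divide)
  qed
  show "(cmod X)^2 - (cmod Y)^2 < 0 \<Longrightarrow> cmod (X / Y) < 1"
  proof -
    assume "(cmod X)^2 - (cmod Y)^2 < 0"
    then have "cmod X < cmod Y" using Y by (simp add: power2_less_imp_less)
    then show ?thesis using Y by (simp add: norm_divide)
  qed
  show "(cmod X)^2 - (cmod Y)^2 > 0 \<Longrightarrow> cmod (X / Y) > 1"
  proof -
    assume "(cmod X)^2 - (cmod Y)^2 > 0"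
    then have "cmod X > cmod Y" by (simp add: power2_less_imp_less)
    then show ?thesis using Y by (simp add: norm_divide)
  qed
qed

lemma delta_id:
  fixes C D C' D' x y :: real
  assumes "D^2 - D'^2 \<noteq> 0"
  shows "(D^2 - D'^2) * (x^2 + y^2) + 2 * (C * D - C' * D') * x + C^2 - C'^2
    = (D^2 - D'^2) * ((x + (C * D - C' * D') / (D^2 - D'^2))^2 + y^2 - ((C' * D - C * D') / (D^2 - D'^2))^2)"
proof -
  define \<Delta> where "\<Delta> = D^2 - D'^2"
  define P where "P = C * D - C' * D'"
  define R where "R = C' * D - C * D'"
  have h: "P^2 - R^2 = (C^2 - C'^2) * \<Delta>" unfolding P_def R_def \<Delta>_def by algebra
  have g: "\<Delta> * ((x + P / \<Delta>)^2 + y^2 - (R / \<Delta>)^2) = \<Delta> * (x^2 + y^2) + 2 * P * x + (P^2 - R^2) / \<Delta>"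
    using assms unfolding \<Delta>_def[symmetric] by (simp add: field_simps power2_eq_square)
  show ?thesis using g assms unfolding h \<Delta>_def[symmetric] P_def[symmetric] R_def[symmetric] by simp
qed


lemma sgn_helper:
  fixes p u :: real
  shows "(u < 0 \<and> p > 0) \<or> (u > 0 \<and> p < 0) \<Longrightarrow> 2 * p * u < 0"
    and "(u > 0 \<and> p > 0) \<or> (u < 0 \<and> p < 0) \<Longrightarrow> 2 * p * u > 0"
  by (auto simp: mult_less_0_iff zero_less_mult_iff)

lemma sq_less_abs: "0 \<le> (m::real) \<Longrightarrow> m < \<bar>r\<bar> \<Longrightarrow> m^2 < r^2"
  by (metis abs_ge_zero power2_abs power_strict_mono zero_less_numeral)

lemma sq_gt_abs: "(m::real) > \<bar>r\<bar> \<Longrightarrow> m^2 > r^2"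
  by (metis abs_ge_zero power2_abs power_strict_mono zero_less_numeral)

lemma abs_sq_less: "\<bar>a::real\<bar> < \<bar>b\<bar> \<Longrightarrow> a^2 < b^2"
  by (metis abs_ge_zero power2_abs power_strict_mono zero_less_numeral)

theorem proposition3p6:
  fixes n k :: nat and A B :: "nat \<Rightarrow> real"
    and C D C' D' \<Delta> c r :: real
  assumes "n \<ge> 1" and "k \<ge> 1" and "odd (n + k)"
  defines "C \<equiv> real n + real k + (\<Sum>j=1..k. (-1) ^ j * (real n + real k - 2 * real j) * A j)"
      and "D \<equiv> (\<Sum>j=1..k. (-1) ^ j * (real n + real k - 2 * real j) * B j)"
      and "C' \<equiv> 1 + (\<Sum>j=1..k. (-1) ^ j * A j)"
      and "D' \<equiv> (\<Sum>j=1..k. (-1) ^ j * B j)"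
      and "\<Delta> \<equiv> D\<^sup>2 - D'\<^sup>2"
      and "c \<equiv> (C * D - C' * D') / \<Delta>"
      and "r \<equiv> (C' * D - C * D') / \<Delta>"
  shows
    "(\<forall>\<alpha>. admissible k A B \<alpha> \<longrightarrow> Omap n k A B \<alpha> (-1) = -1)
   \<and> (\<Delta> \<noteq> 0 \<longrightarrow> (\<forall>\<alpha>. admissible k A B \<alpha> \<longrightarrow>
        (cmod (\<alpha> + complex_of_real c) = \<bar>r\<bar> \<longrightarrow> indifferent_fp (Omap n k A B \<alpha>) (-1))
      \<and> (cmod (\<alpha> + complex_of_real c) < \<bar>r\<bar> \<longrightarrow>
           (if \<Delta> > 0 then attracting_fp (Omap n k A B \<alpha>) (-1) else repelling_fp (Omap n k A B \<alpha>) (-1)))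
      \<and> (cmod (\<alpha> + complex_of_real c) > \<bar>r\<bar> \<longrightarrow>
           (if \<Delta> > 0 then repelling_fp (Omap n k A B \<alpha>) (-1) else attracting_fp (Omap n k A B \<alpha>) (-1)))))
   \<and> (D = D' \<and> D \<noteq> 0 \<longrightarrow> (\<forall>\<alpha>. admissible k A B \<alpha> \<longrightarrow>
        (C = C' \<longrightarrow> indifferent_fp (Omap n k A B \<alpha>) (-1))
      \<and> ((Re \<alpha> < - (C + C') / (2 * D) \<and> D * (C - C') > 0) \<or> (Re \<alpha> > - (C + C') / (2 * D) \<and> D * (C - C') < 0)
           \<longrightarrow> attracting_fp (Omap n k A B \<alpha>) (-1))
      \<and> ((Re \<alpha> > - (C + C') / (2 * D) \<and> D * (C - C') > 0) \<or> (Re \<alpha> < - (C + C') / (2 * D) \<and> D * (C - C') < 0)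
           \<longrightarrow> repelling_fp (Omap n k A B \<alpha>) (-1))))
   \<and> (D = - D' \<and> D \<noteq> 0 \<longrightarrow> (\<forall>\<alpha>. admissible k A B \<alpha> \<longrightarrow>
        (C = - C' \<longrightarrow> indifferent_fp (Omap n k A B \<alpha>) (-1))
      \<and> ((Re \<alpha> < (C' - C) / (2 * D) \<and> D * (C + C') > 0) \<or> (Re \<alpha> > (C' - C) / (2 * D) \<and> D * (C + C') < 0)
           \<longrightarrow> attracting_fp (Omap n k A B \<alpha>) (-1))
      \<and> ((Re \<alpha> > (C' - C) / (2 * D) \<and> D * (C + C') > 0) \<or> (Re \<alpha> < (C' - C) / (2 * D) \<and> D * (C + C') < 0)
           \<longrightarrow> repelling_fp (Omap n k A B \<alpha>) (-1))))
   \<and> (D = 0 \<and> D' = 0 \<longrightarrow> (\<forall>\<alpha>. admissible k A B \<alpha> \<longrightarrow>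
        (\<bar>C\<bar> = \<bar>C'\<bar> \<longrightarrow> indifferent_fp (Omap n k A B \<alpha>) (-1))
      \<and> (\<bar>C\<bar> < \<bar>C'\<bar> \<longrightarrow> attracting_fp (Omap n k A B \<alpha>) (-1))
      \<and> (\<bar>C\<bar> > \<bar>C'\<bar> \<longrightarrow> repelling_fp (Omap n k A B \<alpha>) (-1))))
   \<and> (D \<noteq> 0 \<and> admissible k A B (complex_of_real (- C / D)) \<longrightarrow>
        superattracting_fp (Omap n k A B (complex_of_real (- C / D))) (-1))"
proof -
  have Cd: "C = real n + real k + (\<Sum>j=1..k. (-1) ^ j * (real n + real k - 2 * real j) * A j)" by (simp add: C_def)
  have Dd: "D = (\<Sum>j=1..k. (-1) ^ j * (real n + real k - 2 * real j) * B j)" by (simp add: D_def)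
  have C'd: "C' = 1 + (\<Sum>j=1..k. (-1) ^ j * A j)" by (simp add: C'_def)
  have D'd: "D' = (\<Sum>j=1..k. (-1) ^ j * B j)" by (simp add: D'_def)
  note L = lam[OF assms(1) assms(3) Cd Dd C'd D'd]
  define GG where "GG = (\<lambda>\<alpha>::complex. \<Delta> * ((Re \<alpha>)^2 + (Im \<alpha>)^2) + 2 * (C * D - C' * D') * Re \<alpha> + C^2 - C'^2)"
  have CL: "(GG \<alpha> = 0 \<longrightarrow> indifferent_fp (Omap n k A B \<alpha>) (-1))
      \<and> (GG \<alpha> < 0 \<longrightarrow> attracting_fp (Omap n k A B \<alpha>) (-1))
      \<and> (GG \<alpha> > 0 \<longrightarrow> repelling_fp (Omap n k A B \<alpha>) (-1))" if adm: "admissible k A B \<alpha>" for \<alpha>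
  proof -
    have G: "GG \<alpha> = (cmod (of_real C + of_real D * \<alpha>))^2 - (cmod (of_real C' + of_real D' * \<alpha>))^2"
      unfolding GG_def Gform \<Delta>_def ..
    note c = cls[OF L(2)[OF adm], of "of_real C + of_real D * \<alpha>"]
    show ?thesis unfolding indifferent_fp_def attracting_fp_def repelling_fp_def
      L(1)[OF adm] L(3)[OF adm] G using c by simp
  qed
  have P1: "\<Delta> \<noteq> 0 \<longrightarrow> (\<forall>\<alpha>. admissible k A B \<alpha> \<longrightarrow>
        (cmod (\<alpha> + complex_of_real c) = \<bar>r\<bar> \<longrightarrow> indifferent_fp (Omap n k A B \<alpha>) (-1))
      \<and> (cmod (\<alpha> + complex_of_real c) < \<bar>r\<bar> \<longrightarrow>
           (if \<Delta> > 0 then attracting_fp (Omap n k A B \<alpha>) (-1) else repelling_fp (Omap n k A B \<alpha>) (-1)))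
      \<and> (cmod (\<alpha> + complex_of_real c) > \<bar>r\<bar> \<longrightarrow>
           (if \<Delta> > 0 then repelling_fp (Omap n k A B \<alpha>) (-1) else attracting_fp (Omap n k A B \<alpha>) (-1))))"
  proof (intro impI allI)
    fix \<alpha> :: complex
    assume d: "\<Delta> \<noteq> 0" and adm: "admissible k A B \<alpha>"
    define m where "m = cmod (\<alpha> + complex_of_real c)"
    have m2: "m^2 = (Re \<alpha> + c)^2 + (Im \<alpha>)^2" unfolding m_def cmod_power2 by simp
    have G: "GG \<alpha> = \<Delta> * (m^2 - r^2)"
      unfolding GG_def m2 c_def r_def using delta_id[where C=C and D=D and C'=C' and D'=D' and x="Re \<alpha>" and y="Im \<alpha>"] d unfolding \<Delta>_def by simp
    have m0: "m \<ge> 0" unfolding m_def by simp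
    show "(cmod (\<alpha> + complex_of_real c) = \<bar>r\<bar> \<longrightarrow> indifferent_fp (Omap n k A B \<alpha>) (-1))
      \<and> (cmod (\<alpha> + complex_of_real c) < \<bar>r\<bar> \<longrightarrow>
           (if \<Delta> > 0 then attracting_fp (Omap n k A B \<alpha>) (-1) else repelling_fp (Omap n k A B \<alpha>) (-1)))
      \<and> (cmod (\<alpha> + complex_of_real c) > \<bar>r\<bar> \<longrightarrow>
           (if \<Delta> > 0 then repelling_fp (Omap n k A B \<alpha>) (-1) else attracting_fp (Omap n k A B \<alpha>) (-1)))"
      unfolding m_def[symmetric]
    proof (intro conjI impI)
      assume "m = \<bar>r\<bar>"
      then have "GG \<alpha> = 0" unfolding G by simp
      then show "indifferent_fp (Omap n k A B \<alpha>) (-1)" using CL[OF adm] by blast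
    next
      assume "m < \<bar>r\<bar>"
      then have "m^2 - r^2 < 0" using sq_less_abs[OF m0] by simp
      then show "if \<Delta> > 0 then attracting_fp (Omap n k A B \<alpha>) (-1) else repelling_fp (Omap n k A B \<alpha>) (-1)"
        using CL[OF adm] d unfolding G by (auto simp: mult_pos_neg mult_neg_neg)
    next
      assume "m > \<bar>r\<bar>"
      then have "m^2 - r^2 > 0" using sq_gt_abs by simp
      then show "if \<Delta> > 0 then repelling_fp (Omap n k A B \<alpha>) (-1) else attracting_fp (Omap n k A B \<alpha>) (-1)"
        using CL[OF adm] d unfolding G by (auto simp: mult_neg_pos)
    qed
  qed
  have P2: "D = D' \<and> D \<noteq> 0 \<longrightarrow> (\<forall>\<alpha>. admissible k A B \<alpha> \<longrightarrow>
        (C = C' \<longrightarrow> indifferent_fp (Omap n k A B \<alpha>) (-1))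
      \<and> ((Re \<alpha> < - (C + C') / (2 * D) \<and> D * (C - C') > 0) \<or> (Re \<alpha> > - (C + C') / (2 * D) \<and> D * (C - C') < 0)
           \<longrightarrow> attracting_fp (Omap n k A B \<alpha>) (-1))
      \<and> ((Re \<alpha> > - (C + C') / (2 * D) \<and> D * (C - C') > 0) \<or> (Re \<alpha> < - (C + C') / (2 * D) \<and> D * (C - C') < 0)
           \<longrightarrow> repelling_fp (Omap n k A B \<alpha>) (-1)))"
  proof (intro impI allI)
    fix \<alpha> :: complex
    assume d: "D = D' \<and> D \<noteq> 0" and adm: "admissible k A B \<alpha>"
    define u where "u = Re \<alpha> + (C + C') / (2 * D)"
    have G: "GG \<alpha> = 2 * (D * (C - C')) * u"
      unfolding GG_def u_def \<Delta>_def using d by (simp add: field_simps power2_eq_square)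
    have t: "- (C + C') / (2 * D) = - ((C + C') / (2 * D))" by (simp only: minus_divide_left)
    have lt: "Re \<alpha> < - (C + C') / (2 * D) \<longleftrightarrow> u < 0" unfolding t u_def by linarith
    have gt: "Re \<alpha> > - (C + C') / (2 * D) \<longleftrightarrow> u > 0" unfolding t u_def by linarith
    show "(C = C' \<longrightarrow> indifferent_fp (Omap n k A B \<alpha>) (-1))
      \<and> ((Re \<alpha> < - (C + C') / (2 * D) \<and> D * (C - C') > 0) \<or> (Re \<alpha> > - (C + C') / (2 * D) \<and> D * (C - C') < 0)
           \<longrightarrow> attracting_fp (Omap n k A B \<alpha>) (-1))
      \<and> ((Re \<alpha> > - (C + C') / (2 * D) \<and> D * (C - C') > 0) \<or> (Re \<alpha> < - (C + C') / (2 * D) \<and> D * (C - C') < 0)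
           \<longrightarrow> repelling_fp (Omap n k A B \<alpha>) (-1))"
      unfolding lt gt using CL[OF adm] sgn_helper[of u "D * (C - C')"] unfolding G by auto
  qed
  have P3: "D = - D' \<and> D \<noteq> 0 \<longrightarrow> (\<forall>\<alpha>. admissible k A B \<alpha> \<longrightarrow>
        (C = - C' \<longrightarrow> indifferent_fp (Omap n k A B \<alpha>) (-1))
      \<and> ((Re \<alpha> < (C' - C) / (2 * D) \<and> D * (C + C') > 0) \<or> (Re \<alpha> > (C' - C) / (2 * D) \<and> D * (C + C') < 0)
           \<longrightarrow> attracting_fp (Omap n k A B \<alpha>) (-1))
      \<and> ((Re \<alpha> > (C' - C) / (2 * D) \<and> D * (C + C') > 0) \<or> (Re \<alpha> < (C' - C) / (2 * D) \<and> D * (C + C') < 0)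
           \<longrightarrow> repelling_fp (Omap n k A B \<alpha>) (-1)))"
  proof (intro impI allI)
    fix \<alpha> :: complex
    assume d: "D = - D' \<and> D \<noteq> 0" and adm: "admissible k A B \<alpha>"
    define u where "u = Re \<alpha> - (C' - C) / (2 * D)"
    have G: "GG \<alpha> = 2 * (D * (C + C')) * u"
      unfolding GG_def u_def \<Delta>_def using d by (simp add: field_simps power2_eq_square)
    have lt: "Re \<alpha> < (C' - C) / (2 * D) \<longleftrightarrow> u < 0" unfolding u_def by linarith
    have gt: "Re \<alpha> > (C' - C) / (2 * D) \<longleftrightarrow> u > 0" unfolding u_def by linarith
    show "(C = - C' \<longrightarrow> indifferent_fp (Omap n k A B \<alpha>) (-1))
      \<and> ((Re \<alpha> < (C' - C) / (2 * D) \<and> D * (C + C') > 0) \<or> (Re \<alpha> > (C' - C) / (2 * D) \<and> D * (C + C') < 0)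
           \<longrightarrow> attracting_fp (Omap n k A B \<alpha>) (-1))
      \<and> ((Re \<alpha> > (C' - C) / (2 * D) \<and> D * (C + C') > 0) \<or> (Re \<alpha> < (C' - C) / (2 * D) \<and> D * (C + C') < 0)
           \<longrightarrow> repelling_fp (Omap n k A B \<alpha>) (-1))"
      unfolding lt gt using CL[OF adm] sgn_helper[of u "D * (C + C')"] unfolding G by auto
  qed
  have P4: "D = 0 \<and> D' = 0 \<longrightarrow> (\<forall>\<alpha>. admissible k A B \<alpha> \<longrightarrow>
        (\<bar>C\<bar> = \<bar>C'\<bar> \<longrightarrow> indifferent_fp (Omap n k A B \<alpha>) (-1))
      \<and> (\<bar>C\<bar> < \<bar>C'\<bar> \<longrightarrow> attracting_fp (Omap n k A B \<alpha>) (-1))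
      \<and> (\<bar>C\<bar> > \<bar>C'\<bar> \<longrightarrow> repelling_fp (Omap n k A B \<alpha>) (-1)))"
  proof (intro impI allI)
    fix \<alpha> :: complex
    assume d: "D = 0 \<and> D' = 0" and adm: "admissible k A B \<alpha>"
    have G: "GG \<alpha> = C^2 - C'^2" unfolding GG_def \<Delta>_def using d by simp
    have e: "\<bar>C\<bar> = \<bar>C'\<bar> \<Longrightarrow> C^2 = C'^2" by (metis power2_abs)
    show "(\<bar>C\<bar> = \<bar>C'\<bar> \<longrightarrow> indifferent_fp (Omap n k A B \<alpha>) (-1))
      \<and> (\<bar>C\<bar> < \<bar>C'\<bar> \<longrightarrow> attracting_fp (Omap n k A B \<alpha>) (-1))
      \<and> (\<bar>C\<bar> > \<bar>C'\<bar> \<longrightarrow> repelling_fp (Omap n k A B \<alpha>) (-1))"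
      using CL[OF adm] abs_sq_less[of C C'] abs_sq_less[of C' C] e unfolding G by auto
  qed
  have P5: "D \<noteq> 0 \<and> admissible k A B (complex_of_real (- C / D)) \<longrightarrow>
        superattracting_fp (Omap n k A B (complex_of_real (- C / D))) (-1)"
  proof
    assume h: "D \<noteq> 0 \<and> admissible k A B (complex_of_real (- C / D))"
    then have adm: "admissible k A B (complex_of_real (- C / D))" by simp
    have z0: "C + D * (- C / D) = 0" using h by simp
    have "complex_of_real C + complex_of_real D * complex_of_real (- C / D) = complex_of_real (C + D * (- C / D))"
      by (simp only: of_real_add of_real_mult)
    then have z: "complex_of_real C + complex_of_real D * complex_of_real (- C / D) = 0" using z0 by simp
    show "superattracting_fp (Omap n k A B (complex_of_real (- C / D))) (-1)"
      unfolding superattracting_fp_def L(1)[OF adm] L(3)[OF adm] z by simp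
  qed
  have P0: "\<forall>\<alpha>. admissible k A B \<alpha> \<longrightarrow> Omap n k A B \<alpha> (-1) = -1" using L(1) by blast
  show ?thesis using P0 P1 P2 P3 P4 P5 by blast
qed

end
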